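(* Consider the downtown bathtub model described in the context, with a fixed number $N_s>0$ of suburban commuters, and let $C_s^{b*}$ be the equilibrium bathtub cost of a short-run equilibrium. Put $\theta \equiv \frac{C_s^{b*} v_f}{\alpha L}$. Then (i) $\theta$ satisfies $$F(\theta)\equiv N_s-\alpha n_j\left(\frac{1}{\beta}+\frac{1}{\gamma}\right)\left(\ln\theta+\frac{1}{\theta}-1\right)=0;$$ (ii) hypercongestion exists at the equilibrium if $\theta>2$.
   Context: Downtown traffic (bathtub model): the vehicle accumulation $n(t)\ge 0$ in the downtown area at time $t$ evolves as $\dot n(t)=I(t)-G(t)$, where $I(t)$ is the inflow and $G(t)=n(t)v(t)/L$ is the outflow, $L>0$ is the (common) trip length in the downtown area, and the space-mean speed follows the Greenshields law $v(t)=v_f\left(1-\frac{n(t)}{n_j}\right)$ with free-flow speed $v_f>0$ and jam accumulation $n_j>0$. The downtown travel time of a commuter arriving at work at time $t$ is $T(t)=L/v(t)$. A suburban commuter who arrives at work at time $t$ incurs the bathtub cost $C_s^b(t)=\alpha T(t)+s(t)$, where $s(t)=\beta(t^*-t)$ if $t\le t^*$ and $s(t)=\gamma(t-t^* )$ if $t>t^*$; here $\alpha,\beta,\gamma>0$ are the marginal costs of travel time, earliness and lateness, and $t^*$ is the desired arrival time. A short-run equilibrium (with $N_s$ fixed) is an accumulation path $n(\cdot)$ together with a number $C_s^{b*}$ such that $C_s^b(t)=C_s^{b*}$ for all $t$ with $n(t)>0$, $C_s^b(t)\ge C_s^{b*}$ for all $t$ with $n(t)=0$, and $\int_{\mathbb{R}}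 \frac{n(t)v(t)}{L}\,dt=N_s$. Hypercongestion means that the accumulation exceeds the critical accumulation $n_j/2$ (the accumulation maximizing the outflow $n v/L$) at some time. *)

theory Defs
  imports "HOL-Analysis.Analysis"
begin

definition speed :: "real \<Rightarrow> real \<Rightarrow> real \<Rightarrow> real" where
  "speed vf nj n = vf * (1 - n / nj)"

definition travel_time :: "real \<Rightarrow> real \<Rightarrow> real \<Rightarrow> real \<Rightarrow> real" where
  "travel_time L vf nj n = L / speed vf nj n"

definition sched :: "real \<Rightarrow> real \<Rightarrow> real \<Rightarrow> real \<Rightarrow> real" where
  "sched \<beta> \<gamma> tstar t = (if t \<le> tstar then \<beta> * (tstar - t) else \<gamma> * (t - tstar))"

definition bathtub_cost ::
  "real \<Rightarrow> real \<Rightarrow> real \<Rightarrow> real \<Rightarrow> real \<Rightarrow> real \<Rightarrow> real \<Rightarrow> (real \<Rightarrow> real) \<Rightarrow> real \<Rightarrow> real" where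
  "bathtub_cost L vf nj \<alpha> \<beta> \<gamma> tstar n t =
     \<alpha> * travel_time L vf nj (n t) + sched \<beta> \<gamma> tstar t"

text \<open>Short-run equilibrium: accumulation path n (with 0 \<le> n < n_j, so travel time
  is finite) and equilibrium cost C such that the cost equals C whenever n > 0,
  is at least C whenever n = 0, and total outflow equals N_s.\<close>
definition short_run_equilibrium ::
  "real \<Rightarrow> real \<Rightarrow> real \<Rightarrow> real \<Rightarrow> real \<Rightarrow> real \<Rightarrow> real \<Rightarrow> real \<Rightarrow> (real \<Rightarrow> real) \<Rightarrow> real \<Rightarrow> bool" where
  "short_run_equilibrium L vf nj \<alpha> \<beta> \<gamma> tstar Ns n C \<longleftrightarrow>
     (\<forall>t. 0 \<le> n t \<and> n t < nj) \<and>
     (\<forall>t. n t > 0 \<longrightarrow> bathtub_cost L vf nj \<alpha> \<beta> \<gamma> tstar n t = C) \<and>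
     (\<forall>t. n t = 0 \<longrightarrow> bathtub_cost L vf nj \<alpha> \<beta> \<gamma> tstar n t \<ge> C) \<and>
     ((\<lambda>t. n t * speed vf nj (n t) / L) has_integral Ns) UNIV"

text \<open>Hypercongestion: accumulation exceeds the critical accumulation n_j/2 at some time.\<close>
definition hypercongestion :: "real \<Rightarrow> (real \<Rightarrow> real) \<Rightarrow> bool" where
  "hypercongestion nj n \<longleftrightarrow> (\<exists>t. n t > nj / 2)"

end

theory Submission
  imports Defs
begin

lemma pt:
  fixes L vf nj \<alpha> m s C :: real
  assumes "0<L" "0<vf" "0<nj" "0<\<alpha>" "0 \<le> m" "m < nj"
    and eq: "m > 0 \<Longrightarrow> \<alpha>*(L/(vf*(1-m/nj))) + s = C"
    and ge: "m = 0 \<Longrightarrow> \<alpha>*(L/(vf*(1-m/nj))) + s \<ge> C"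
  shows "m * (vf*(1-m/nj))/L = (if C - s \<ge> \<alpha>*L/vf then nj * vf/L*((\<alpha>*L/vf)/(C-s) - ((\<alpha>*L/vf)/(C-s))^2) else 0)"
proof (cases "m > 0")
  case True
  define y where "y = 1 - m/nj"
  have y0: "y > 0" "y \<le> 1" using assms True by (auto simp: y_def field_simps)
  have m: "m = nj*(1-y)" using assms by (simp add: y_def field_simps)
  have Cs: "C - s = (\<alpha>*L/vf)/y" using eq[OF True] by (simp add: y_def[symmetric] field_simps)
  have ge1: "C - s \<ge> \<alpha>*L/vf" unfolding Cs using y0 assms
    by (simp add: divide_simps mult_le_cancel_left1)
  have x: "(\<alpha>*L/vf)/(C-s) = y" unfolding Cs using y0 assms by simp
  show ?thesis using ge1 unfolding x y_def[symmetric] m using assms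
    by (simp add: y_def field_simps power2_eq_square)
next
  case False
  hence m0: "m = 0" using assms by simp
  have "C - s \<le> \<alpha>*L/vf" using ge[OF m0] m0 by simp
  moreover have "C - s = \<alpha>*L/vf \<Longrightarrow> (\<alpha>*L/vf)/(C-s) = 1" using assms by simp
  ultimately show ?thesis using m0 assms by auto
qed

theorem lemma1:
  fixes L vf nj \<alpha> \<beta> \<gamma> tstar Ns C :: real and n :: "real \<Rightarrow> real"
  assumes "L > 0" "vf > 0" "nj > 0" "\<alpha> > 0" "\<beta> > 0" "\<gamma> > 0" "Ns > 0"
    and "short_run_equilibrium L vf nj \<alpha> \<beta> \<gamma> tstar Ns n C"
  shows "Ns - \<alpha> * nj * (1 / \<beta> + 1 / \<gamma>) *
           (ln (C * vf / (\<alpha> * L)) + 1 / (C * vf / (\<alpha> * L)) - 1) = 0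
         \<and> (C * vf / (\<alpha> * L) > 2 \<longrightarrow> hypercongestion nj n)"
proof -
  note pos = assms(1-7)
  define a where "a = \<alpha>*L/vf"
  define K where "K = nj * vf/L"
  define sv where "sv = sched \<beta> \<gamma> tstar"
  define g where "g = (\<lambda>t. if C - sv t \<ge> a then K*(a/(C-sv t) - (a/(C-sv t))^2) else 0)"
  have a0: "a > 0" using pos by (simp add: a_def)
  have K0: "K > 0" using pos by (simp add: K_def)
  have bnd: "\<And>t. 0 \<le> n t \<and> n t < nj"
   and eq: "\<And>t. n t > 0 \<Longrightarrow> bathtub_cost L vf nj \<alpha> \<beta> \<gamma> tstar n t = C"
   and ge: "\<And>t. n t = 0 \<Longrightarrow> bathtub_cost L vf nj \<alpha> \<beta> \<gamma> tstar n t \<ge> C"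
   and hi: "((\<lambda>t. n t * speed vf nj (n t) / L) has_integral Ns) UNIV"
    using assms(8) unfolding short_run_equilibrium_def by auto
  have hg: "n t * speed vf nj (n t) / L = g t" for t
    unfolding speed_def g_def a_def K_def
    apply (rule pt)
    using pos bnd[of t] eq[of t] ge[of t]
    by (auto simp: bathtub_cost_def travel_time_def speed_def sv_def)
  have gi: "(g has_integral Ns) UNIV"
    using hi hg by (simp add: has_integral_eq)
  have sv0: "sv t \<ge> 0" for t using pos by (simp add: sv_def sched_def)
  have Ca: "C > a"
  proof (rule ccontr)
    assume "\<not> C > a"
    have "g t = 0" for t
    proof (cases "C - sv t \<ge> a")
      case True
      hence "C - sv t = a" using sv0[of t] \<open>\<not> C > a\<close> by linarith
      then show ?thesis using a0 by (simp add: g_def)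
    qed (simp add: g_def)
    hence "g = (\<lambda>_. 0)" by auto
    with gi have "((\<lambda>_. 0::real) has_integral Ns) UNIV" by simp
    hence "Ns = 0" using has_integral_0 has_integral_unique by blast
    with pos show False by simp
  qed
  have ii: "C * vf / (\<alpha> * L) = C / a" unfolding a_def using pos by (simp add: field_simps)
  have svs: "sv tstar = 0" by (simp add: sv_def sched_def)
  have part2: "C / a > 2 \<longrightarrow> hypercongestion nj n"
  proof
    assume th: "C / a > 2"
    hence Ca2: "C > 2*a" using a0 by (simp add: field_simps)
    show "hypercongestion nj n"
    proof (cases "n tstar > 0")
      case True
      have "\<alpha>*(L/(vf*(1 - n tstar/nj))) = C"
        using eq[OF True] svs by (simp add: bathtub_cost_def travel_time_def speed_def sv_def)
      hence "a / (1 - n tstar/nj) = C" by (simp add: a_def field_simps)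
      moreover have "1 - n tstar/nj > 0" using bnd[of tstar] pos by (simp add: field_simps)
      ultimately have "1 - n tstar/nj = a / C"
      proof -
        fix y :: real assume "a / y = C" "y > 0"
        hence "a = C * y" by (simp add: divide_eq_eq)
        thus "y = a / C" using Ca a0 by simp
      qed
      moreover have "a / C < 1/2" using Ca2 a0 by (simp add: field_simps)
      ultimately have "n tstar / nj > 1/2" by linarith
      hence "n tstar > nj/2" using pos by (simp add: field_simps)
      thus ?thesis unfolding hypercongestion_def by blast
    next
      case False
      hence "n tstar = 0" using bnd[of tstar] by linarith
      hence "\<alpha>*(L/vf) \<ge> C" using ge[of tstar] svs
        by (simp add: bathtub_cost_def travel_time_def speed_def sv_def)
      hence "a \<ge> C" by (simp add: a_def)
      with Ca2 a0 show ?thesis by simp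
    qed
  qed
  define t1 where "t1 = tstar - (C-a)/\<beta>"
  define t2 where "t2 = tstar + (C-a)/\<gamma>"
  have t1l: "t1 \<le> tstar" using Ca pos by (simp add: t1_def)
  have t2l: "tstar \<le> t2" using Ca pos by (simp add: t2_def)
  define u1 where "u1 = (\<lambda>t. C - \<beta>*(tstar - t))"
  define u2 where "u2 = (\<lambda>t. C - \<gamma>*(t - tstar))"
  define F1 where "F1 = (\<lambda>t. K/\<beta>*(a*ln (u1 t) + a^2/u1 t))"
  define F2 where "F2 = (\<lambda>t. -K/\<gamma>*(a*ln (u2 t) + a^2/u2 t))"
  have u1a: "u1 t \<ge> a" if "t \<in> {t1..tstar}" for t
  proof -
    have "\<beta>*(tstar - t) \<le> \<beta>*((C-a)/\<beta>)" using that pos by (intro mult_left_mono) (auto simp: t1_def)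
    thus ?thesis using pos by (simp add: u1_def)
  qed
  have u2a: "u2 t \<ge> a" if "t \<in> {tstar..t2}" for t
  proof -
    have "\<gamma>*(t - tstar) \<le> \<gamma>*((C-a)/\<gamma>)" using that pos by (intro mult_left_mono) (auto simp: t2_def)
    thus ?thesis using pos by (simp add: u2_def)
  qed
  have I1: "((\<lambda>t. K*(a/u1 t - (a/u1 t)^2)) has_integral (F1 tstar - F1 t1)) {t1..tstar}"
  proof (rule fundamental_theorem_of_calculus[OF t1l])
    fix t assume t: "t \<in> {t1..tstar}"
    have up: "u1 t > 0" using u1a[OF t] a0 by linarith
    have "(F1 has_real_derivative K/\<beta>*(a*(\<beta>/u1 t) + a^2*(-(\<beta>)/(u1 t)^2))) (at t within {t1..tstar})"
      unfolding F1_def u1_def using up pos unfolding u1_def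
      by (auto intro!: derivative_eq_intros simp: power2_eq_square)
    moreover have "K/\<beta>*(a*(\<beta>/u1 t) + a^2*(-(\<beta>)/(u1 t)^2)) = K*(a/u1 t - (a/u1 t)^2)"
      using pos up by (simp add: field_simps power2_eq_square)
    ultimately show "(F1 has_vector_derivative K*(a/u1 t - (a/u1 t)^2)) (at t within {t1..tstar})"
      by (simp add: has_real_derivative_iff_has_vector_derivative)
  qed
  have I2: "((\<lambda>t. K*(a/u2 t - (a/u2 t)^2)) has_integral (F2 t2 - F2 tstar)) {tstar..t2}"
  proof (rule fundamental_theorem_of_calculus[OF t2l])
    fix t assume t: "t \<in> {tstar..t2}"
    have up: "u2 t > 0" using u2a[OF t] a0 by linarith
    have "(F2 has_real_derivative -K/\<gamma>*(a*(-\<gamma>/u2 t) + a^2*(\<gamma>/(u2 t)^2))) (at t within {tstar..t2})"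
      unfolding F2_def u2_def using up pos unfolding u2_def
      by (auto intro!: derivative_eq_intros simp: power2_eq_square)
    moreover have "-K/\<gamma>*(a*(-\<gamma>/u2 t) + a^2*(\<gamma>/(u2 t)^2)) = K*(a/u2 t - (a/u2 t)^2)"
      using pos up by (simp add: field_simps power2_eq_square)
    ultimately show "(F2 has_vector_derivative K*(a/u2 t - (a/u2 t)^2)) (at t within {tstar..t2})"
      by (simp add: has_real_derivative_iff_has_vector_derivative)
  qed
  have J1: "(g has_integral (F1 tstar - F1 t1)) {t1..tstar}"
  proof (rule has_integral_eq[OF _ I1])
    fix t assume t: "t \<in> {t1..tstar}"
    have "sv t = \<beta>*(tstar - t)" using t by (simp add: sv_def sched_def)
    hence "C - sv t = u1 t" by (simp add: u1_def)
    thus "K*(a/u1 t - (a/u1 t)^2) = g t" using u1a[OF t] by (simp add: g_def)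
  qed
  have J2: "(g has_integral (F2 t2 - F2 tstar)) {tstar..t2}"
  proof (rule has_integral_eq[OF _ I2])
    fix t assume t: "t \<in> {tstar..t2}"
    have "sv t = \<gamma>*(t - tstar)" using t by (auto simp: sv_def sched_def)
    hence "C - sv t = u2 t" by (simp add: u2_def)
    thus "K*(a/u2 t - (a/u2 t)^2) = g t" using u2a[OF t] by (simp add: g_def)
  qed
  have J: "(g has_integral (F1 tstar - F1 t1 + (F2 t2 - F2 tstar))) {t1..t2}"
    by (rule has_integral_combine[OF t1l t2l J1 J2])
  have JU: "(g has_integral (F1 tstar - F1 t1 + (F2 t2 - F2 tstar))) UNIV"
  proof (rule has_integral_on_superset[OF J])
    fix t assume "t \<notin> {t1..t2}"
    hence "t < t1 \<or> t > t2" by auto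
    thus "g t = 0"
    proof
      assume "t < t1"
      hence "\<beta>*(tstar - t) > \<beta>*((C-a)/\<beta>)" using pos by (intro mult_strict_left_mono) (auto simp: t1_def)
      moreover have "sv t = \<beta>*(tstar - t)" using \<open>t < t1\<close> t1l by (simp add: sv_def sched_def)
      ultimately show ?thesis using pos by (simp add: g_def)
    next
      assume "t > t2"
      hence "\<gamma>*(t - tstar) > \<gamma>*((C-a)/\<gamma>)" using pos by (intro mult_strict_left_mono) (auto simp: t2_def)
      moreover have "sv t = \<gamma>*(t - tstar)" using \<open>t > t2\<close> t2l by (simp add: sv_def sched_def)
      ultimately show ?thesis using pos by (simp add: g_def)
    qed
  qed auto
  have NsV: "Ns = F1 tstar - F1 t1 + (F2 t2 - F2 tstar)"
    using has_integral_unique[OF gi JU] .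
  have u1t: "u1 tstar = C" "u1 t1 = a" using pos by (simp_all add: u1_def t1_def)
  have u2t: "u2 tstar = C" "u2 t2 = a" using pos by (simp_all add: u2_def t2_def)
  have lnq: "ln (C/a) = ln C - ln a" using a0 Ca by (simp add: ln_div)
  have Ka: "K*a = \<alpha>*nj" using pos by (simp add: K_def a_def)
  have "F1 tstar - F1 t1 + (F2 t2 - F2 tstar) = K*a*(1/\<beta>+1/\<gamma>)*(ln C - ln a + a/C - 1)"
    unfolding F1_def F2_def u1t u2t using a0 Ca pos by (simp add: field_simps power2_eq_square)
  hence "Ns = \<alpha>*nj*(1/\<beta>+1/\<gamma>)*(ln (C/a) + 1/(C/a) - 1)"
    using NsV unfolding lnq Ka by simp
  thus ?thesis using part2 unfolding ii by simp
qed

end
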